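(* Let $a,b>0$ with $a+b\leq1$, let $c\geq0$, and let $$B_{a,b}(x)={}_2F_1(a,b;a+b;x)-\frac{a(a+1)b(b+1)}{(a+b)(a+b+1)}\,{}_2F_1(a,b;a+b+2;x)\,\big(c-\log(1-x)\big).$$ Then $\big(-B_{a,b}'\big)^{(n)}(x)>0$ for all $n\geq0$ and all $x\in(0,1)$.
   Context: ${}_2F_1$ is the Gauss hypergeometric function. *)

theory Defs
  imports "HOL-Analysis.Analysis"
begin

definition hyp2F1 :: "real \<Rightarrow> real \<Rightarrow> real \<Rightarrow> real \<Rightarrow> real" where
  "hyp2F1 a b c x =
     (\<Sum>n. pochhammer a n * pochhammer b n / (pochhammer c n * fact n) * x ^ n)"

end

theory Submission
  imports Defs "HOL-Analysis.Analysis"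
begin

definition cf :: "real \<Rightarrow> real \<Rightarrow> real \<Rightarrow> nat \<Rightarrow> real" where
  "cf a b s n = pochhammer a n * pochhammer b n / (pochhammer s n * fact n)"

lemma cf_Suc:
  assumes "s > 0"
  shows "cf a b s (Suc n) = cf a b s n * ((a + n) * (b + n) / ((s + n) * (n + 1)))"
proof -
  have "pochhammer s n > 0" using assms pochhammer_pos by blast
  moreover have "s + n > 0" using assms by simp
  ultimately show ?thesis unfolding cf_def pochhammer_Suc fact_Suc
    by (simp add: field_simps)
qed

lemma cf_pos: "a > 0 \<Longrightarrow> b > 0 \<Longrightarrow> s > 0 \<Longrightarrow> cf a b s n > 0"
  unfolding cf_def by (intro divide_pos_pos mult_pos_pos pochhammer_pos) auto

lemma cf_le1:
  assumes "a > 0" "b > 0" "s > 0" "a * b \<le> s" "a + b \<le> s"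
  shows "cf a b s n \<le> 1"
proof (induction n)
  case 0 then show ?case by (simp add: cf_def)
next
  case (Suc n)
  have r: "(a + n) * (b + n) \<le> (s + n) * (n + 1)"
  proof -
    have "(a + b) * n \<le> s * n" using assms by (intro mult_right_mono) auto
    then show ?thesis using assms by (simp add: algebra_simps)
  qed
  have "(a + n) * (b + n) / ((s + n) * (n + 1)) \<le> 1"
    using r assms by (subst divide_le_eq_1) auto
  moreover have "(a + n) * (b + n) / ((s + n) * (n + 1)) \<ge> 0" using assms by simp
  ultimately show ?case using Suc cf_pos[OF assms(1-3), of n] cf_Suc[OF assms(3), where a=a and b=b and n=n]
    by (metis less_eq_real_def mult_le_one)
qed

lemma cf_shift2:
  assumes "s > 0"
  shows "cf a b (s + 2) n = cf a b s n * (s * (s + 1) / ((s + n) * (s + n + 1)))"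
proof -
  have p1: "pochhammer s (Suc (Suc n)) = s * (s + 1) * pochhammer (s + 2) n"
    by (simp add: pochhammer_rec add.assoc)
  have p2: "pochhammer s (Suc (Suc n)) = pochhammer s n * (s + n) * (s + n + 1)"
    by (simp add: pochhammer_Suc add.assoc)
  have "pochhammer s n > 0" "pochhammer (s+2) n > 0" using assms by (auto intro!: pochhammer_pos)
  moreover have "s + n > 0" using assms by simp
  ultimately have nz: "s * (s + 1) \<noteq> 0" using assms by simp
  have e: "pochhammer s n * ((s + n) * (s + n + 1)) = s * (s + 1) * pochhammer (s + 2) n"
    using p1 p2 by (simp add: mult.assoc)
  define X where "X = pochhammer a n * pochhammer b n"
  have "X / (pochhammer s n * fact n) * (s * (s + 1) / ((s + n) * (s + n + 1)))
      = (X * (s * (s + 1))) / ((pochhammer s n * ((s + n) * (s + n + 1))) * fact n)"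
    by (simp add: mult_ac)
  also have "\<dots> = (X * (s * (s + 1))) / ((s * (s + 1)) * (pochhammer (s + 2) n * fact n))"
    unfolding e by (simp add: mult_ac)
  also have "\<dots> = X / (pochhammer (s + 2) n * fact n)"
    using nz by simp
  finally show ?thesis unfolding cf_def X_def by simp

qed

lemma alg0:
  fixes a b m u D :: real
  assumes D: "D = a + b + m" "D \<noteq> 0" "D + 1 \<noteq> 0"
  shows "a * b * m * u / D + m * u + a * (a + 1) * b * (b + 1) * u / (D * (D + 1))
    - u * (a + m) * (b + m) / D = a * b * u * (a + m) * (b + m) / (D * (D + 1))"
proof -
  have "a * b * m * u / D + m * u + a * (a + 1) * b * (b + 1) * u / (D * (D + 1))
    - u * (a + m) * (b + m) / D = (a * b * m * u * (D + 1) + m * u * D * (D + 1) + a * (a + 1) * b * (b + 1) * u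
    - u * (a + m) * (b + m) * (D + 1)) / (D * (D + 1))"
  proof -
    define E where "E = D * (D + 1)"
    have E: "E \<noteq> 0" using D(2,3) unfolding E_def by simp
    have e1: "a * b * m * u / D = (a * b * m * u * (D + 1)) / E"
      using D(2,3) unfolding E_def by simp
    have e2: "m * u = (m * u * D * (D + 1)) / E"
      using E unfolding E_def by simp
    have e3: "u * (a + m) * (b + m) / D = (u * (a + m) * (b + m) * (D + 1)) / E"
      using D(2,3) unfolding E_def by simp
    show ?thesis unfolding E_def[symmetric] e1
      apply (subst e2) apply (subst e3)
      by (simp only: add_divide_distrib diff_divide_distrib)
  qed
  also have "a * b * m * u * (D + 1) + m * u * D * (D + 1) + a * (a + 1) * b * (b + 1) * u
    - u * (a + m) * (b + m) * (D + 1) = a * b * u * (a + m) * (b + m)"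
    unfolding D(1) by (simp add: algebra_simps)
  finally show ?thesis .
qed

lemma alg:
  fixes a b m u :: real
  assumes "a > 0" "b > 0" "m > 0"
  shows "a * b * m * u / (a + b + m) + m * u + a * (a + 1) * b * (b + 1) * u / ((a + b + m) * (a + b + m + 1))
    - u * (a + m) * (b + m) / (a + b + m) = a * b * u * (a + m) * (b + m) / ((a + b + m) * (a + b + m + 1))"
  using alg0[of "a + b + m" a b m u] assms by simp

lemma key_identity:
  assumes "a > 0" "b > 0"
  defines "s \<equiv> a + b"
  defines "K \<equiv> (a * (a + 1) * b * (b + 1)) / ((a + b) * (a + b + 1))"
  shows "K * (\<Sum>i=0..n. cf a b (s + 2) i) - (n + 1) * cf a b s (Suc n)
          = a * b * (n + 1) * cf a b s (Suc n) / (s + n + 1)"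
proof (induction n)
  case 0
  have "s > 0" using assms by simp
  have c1: "cf a b s (Suc 0) = a * b / s" by (simp add: cf_def)
  have c0: "cf a b (s+2) 0 = 1" by (simp add: cf_def)
  have "a + b + 1 > 0" using assms by simp
  have e: "(a * (a + 1) * b * (b + 1)) / ((a + b) * (a + b + 1)) - a * b / (a + b)
      = a * b * (a * b / (a + b)) / (a + b + 1)"
  proof -
    have "a + b \<noteq> 0" "a + b + 1 \<noteq> 0" using assms by auto
    then show ?thesis by (simp add: divide_simps) (simp add: algebra_simps)
  qed
  then have "K - a * b / s = a * b * (a * b / s) / (s + 1)" unfolding K_def s_def .
  then show ?case using c0 c1 by simp
next
  case (Suc n)
  have s: "s > 0" using assms by simp
  define u where "u = cf a b s (Suc n)"
  define m where "m = real (Suc n)"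
  have g: "cf a b (s+2) (Suc n) = u * (s * (s + 1) / ((s + m) * (s + m + 1)))"
    unfolding u_def m_def by (rule cf_shift2[OF s])
  have f: "cf a b s (Suc (Suc n)) = u * ((a + m) * (b + m) / ((s + m) * (m + 1)))"
    unfolding u_def m_def using cf_Suc[OF s, where a=a and b=b and n="Suc n"] by simp
  have IH: "K * (\<Sum>i=0..n. cf a b (s + 2) i) = a * b * m * u / (s + m) + m * u"
  proof -
    have mm: "m = real n + 1" unfolding m_def by simp
    have "K * (\<Sum>i=0..n. cf a b (s + 2) i) = (real n + 1) * u + a * b * (real n + 1) * u / (s + real n + 1)"
      using Suc unfolding u_def by (simp only: diff_eq_eq)
    moreover have "s + real n + 1 = s + m" "real n + 1 = m" unfolding mm by simp_all
    ultimately show ?thesis by (metis add.commute)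
  qed
  have "K * (\<Sum>i=0..Suc n. cf a b (s + 2) i) - real (Suc n + 1) * cf a b s (Suc (Suc n))
     = a * b * m * u / (s + m) + m * u + K * (u * (s * (s + 1) / ((s + m) * (s + m + 1))))
       - (m + 1) * (u * ((a + m) * (b + m) / ((s + m) * (m + 1))))"
    using IH g f unfolding m_def by (simp only: sum.atLeast0_atMost_Suc distrib_left) simp
  also have "\<dots> = a * b * (m + 1) * (u * ((a + m) * (b + m) / ((s + m) * (m + 1)))) / (s + (m + 1))"
  proof -
    have p: "s + m > 0" "m + 1 > 0" "s + m + 1 > 0" "a + b > 0" "a + b + 1 > 0" "m > 0"
      using s assms unfolding m_def s_def by auto
    have K1: "K * (s * (s + 1)) = a * (a + 1) * b * (b + 1)"
      unfolding K_def s_def using p by simp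
    have KK: "K * (u * (s * (s + 1) / ((s + m) * (s + m + 1))))
        = a * (a + 1) * b * (b + 1) * u / ((s + m) * (s + m + 1))"
    proof -
      have "K * (u * (s * (s + 1) / ((s + m) * (s + m + 1)))) = (K * (s * (s + 1))) * u / ((s + m) * (s + m + 1))"
        by (simp add: ac_simps)
      then show ?thesis unfolding K1 .
    qed
    have MM0: "(m + 1) * (u * ((a + m) * (b + m) / ((s + m) * (m + 1))))
       = (u * (a + m) * (b + m) / (s + m)) * ((m + 1) / (m + 1))"
      by (simp add: ac_simps)
    have MM: "(m + 1) * (u * ((a + m) * (b + m) / ((s + m) * (m + 1)))) = u * (a + m) * (b + m) / (s + m)"
      unfolding MM0 using p by simp
    have RR: "a * b * (m + 1) * (u * ((a + m) * (b + m) / ((s + m) * (m + 1)))) / (s + (m + 1))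
        = a * b * u * (a + m) * (b + m) / ((s + m) * (s + m + 1))"
    proof -
      have "a * b * (m + 1) * (u * ((a + m) * (b + m) / ((s + m) * (m + 1)))) / (s + (m + 1))
        = (a * b * u * (a + m) * (b + m) / ((s + m) * (s + m + 1))) * ((m + 1) / (m + 1))"
        by (simp add: ac_simps)
      then show ?thesis using p by simp
    qed
    show ?thesis unfolding KK MM RR using alg[OF assms(1,2) p(6), of u] unfolding s_def by simp
  qed
  finally show ?case using f unfolding m_def by (simp add: add.assoc)
qed


lemma radius_bounded:
  fixes f :: "nat \<Rightarrow> real"
  assumes "\<And>n. \<bar>f n\<bar> \<le> M"
  shows "1 \<le> fps_conv_radius (Abs_fps f)"
proof -
  have "conv_radius f \<ge> 1"
  proof (rule conv_radius_geI_ex')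
    fix r :: real assume r: "0 < r" "ereal r < 1"
    then have r1: "r < 1" by simp
    show "summable (\<lambda>n. f n * of_real r ^ n)"
    proof (rule summable_comparison_test'[where g="\<lambda>n. M * r ^ n" and N=0])
      show "summable (\<lambda>n. M * r ^ n)"
        using r r1 by (intro summable_mult summable_geometric) auto
      fix n :: nat
      have "\<bar>f n\<bar> * r ^ n \<le> M * r ^ n"
        using assms r by (intro mult_right_mono) auto
      then show "norm (f n * of_real r ^ n) \<le> M * r ^ n"
        using r by (simp add: abs_mult)
    qed
  qed
  then show ?thesis by (simp add: fps_conv_radius_def)
qed

lemma ereal_lt_radius:
  fixes x :: real
  assumes "\<bar>x\<bar> < 1" "1 \<le> R"
  shows "ereal (norm x) < R"
proof -
  have "ereal (norm x) < 1" using assms(1) by simp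
  then show ?thesis using assms(2) by (rule less_le_trans)
qed

lemma radius_lt_add: "r < fps_conv_radius f \<Longrightarrow> r < fps_conv_radius g \<Longrightarrow> r < fps_conv_radius (f + g)"
  using fps_conv_radius_add[of f g] by (meson less_le_trans min_less_iff_conj)

lemma radius_lt_diff: "r < fps_conv_radius f \<Longrightarrow> r < fps_conv_radius g \<Longrightarrow> r < fps_conv_radius (f - g)"
  using fps_conv_radius_diff[of f g] by (meson less_le_trans min_less_iff_conj)

lemma radius_lt_mult:
  fixes f g :: "'a :: {banach, real_normed_div_algebra, comm_ring_1} fps"
  shows "r < fps_conv_radius f \<Longrightarrow> r < fps_conv_radius g \<Longrightarrow> r < fps_conv_radius (f * g)"
  using fps_conv_radius_mult[of f g] by (meson less_le_trans min_less_iff_conj)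

lemma radius_lt_deriv:
  fixes f :: "real fps"
  shows "r < fps_conv_radius f \<Longrightarrow> r < fps_conv_radius (fps_deriv f)"
  using fps_conv_radius_deriv[of f] by (meson less_le_trans)

lemma radius_funpow_deriv:
  fixes Q :: "real fps"
  assumes "1 \<le> fps_conv_radius Q"
  shows "1 \<le> fps_conv_radius ((fps_deriv ^^ n) Q)"
proof (induction n)
  case 0 then show ?case using assms by simp
next
  case (Suc n) then show ?case using fps_conv_radius_deriv[of "(fps_deriv ^^ n) Q"] by simp
qed

lemma higher_deriv_eval_fps:
  fixes Q :: "real fps" and g :: "real \<Rightarrow> real"
  assumes R: "1 \<le> fps_conv_radius Q" and eq: "\<And>x. \<bar>x\<bar> < 1 \<Longrightarrow> g x = eval_fps Q x"
  shows "\<bar>x\<bar> < 1 \<Longrightarrow> (deriv ^^ n) g x = eval_fps ((fps_deriv ^^ n) Q) x"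
proof (induction n arbitrary: x)
  case 0 then show ?case using eq by simp
next
  case (Suc n)
  have lt: "ereal (norm x) < fps_conv_radius ((fps_deriv ^^ n) Q)"
    using radius_funpow_deriv[OF R, of n] Suc.prems by (intro ereal_lt_radius) auto
  have d: "(eval_fps ((fps_deriv ^^ n) Q) has_field_derivative
        eval_fps (fps_deriv ((fps_deriv ^^ n) Q)) x) (at x)"
    by (rule has_field_derivative_eval_fps[OF lt])
  have d2: "((deriv ^^ n) g has_field_derivative eval_fps (fps_deriv ((fps_deriv ^^ n) Q)) x) (at x)"
  proof (rule has_field_derivative_transform_within_open[OF d, of "{-1<..<1}"])
    show "open {-1<..<(1::real)}" by simp
    show "x \<in> {-1<..<1}" using Suc.prems by auto
    fix y :: real assume "y \<in> {-1<..<1}"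
    then have "\<bar>y\<bar> < 1" by auto
    then show "eval_fps ((fps_deriv ^^ n) Q) y = (deriv ^^ n) g y" using Suc.IH by simp
  qed
  show ?case using DERIV_imp_deriv[OF d2] by simp
qed

lemma funpow_deriv_pos:
  fixes Q :: "real fps"
  assumes "\<And>k. fps_nth Q k > 0"
  shows "fps_nth ((fps_deriv ^^ n) Q) k > 0"
  using assms by (induction n arbitrary: k) auto

lemma eval_fps_pos:
  fixes P :: "real fps"
  assumes "\<And>k. fps_nth P k > 0" "1 \<le> fps_conv_radius P" "0 < x" "x < 1"
  shows "eval_fps P x > 0"
proof -
  have "ereal (norm x) < fps_conv_radius P" using assms by (intro ereal_lt_radius) auto
  then have "summable (\<lambda>n. fps_nth P n * x ^ n)" by (rule summable_fps)
  then show ?thesis unfolding eval_fps_def using assms by (intro suminf_pos) auto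
qed


theorem lemma9:
  fixes a b c :: real
  assumes "a > 0" and "b > 0" and "a + b \<le> 1" and "c \<ge> 0"
  defines "B \<equiv> (\<lambda>x. hyp2F1 a b (a + b) x
      - (a * (a + 1) * b * (b + 1)) / ((a + b) * (a + b + 1))
        * hyp2F1 a b (a + b + 2) x * (c - ln (1 - x)))"
  shows "\<forall>n::nat. \<forall>x \<in> {0<..<1::real}.
           (deriv ^^ n) (\<lambda>t. - deriv B t) x > 0"
proof -
  define K where "K = (a * (a + 1) * b * (b + 1)) / ((a + b) * (a + b + 1))"
  define Fs where "Fs = Abs_fps (cf a b (a + b))"
  define Gs where "Gs = Abs_fps (cf a b (a + b + 2))"
  define Ls where "Ls = Abs_fps (\<lambda>n. 1 / real n)"
  define Os where "Os = Abs_fps (\<lambda>n. 1 :: real)"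
  define Q where "Q = fps_const (K * c) * fps_deriv Gs + fps_const K * (fps_deriv Gs * Ls)
     + fps_const K * (Gs * Os) - fps_deriv Fs"
  have s0: "a + b > 0" using assms by simp
  have K0: "K > 0" unfolding K_def using assms by simp
  have ab: "a * b \<le> a + b" using assms
    by (smt (verit, best) mult_left_le)
  have hF: "hyp2F1 a b (a + b) x = eval_fps Fs x" for x
    unfolding hyp2F1_def eval_fps_def Fs_def cf_def by simp
  have hG: "hyp2F1 a b (a + b + 2) x = eval_fps Gs x" for x
    unfolding hyp2F1_def eval_fps_def Gs_def cf_def by simp
  have Bdef: "B = (\<lambda>x. eval_fps Fs x - K * eval_fps Gs x * (c - ln (1 - x)))"
    unfolding B_def K_def hF hG ..
  have rF: "1 \<le> fps_conv_radius Fs" unfolding Fs_def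
    by (rule radius_bounded[where M=1]) (use cf_pos[OF assms(1,2) s0] cf_le1[OF assms(1,2) s0 ab] in \<open>simp add: less_imp_le\<close>)
  have rG: "1 \<le> fps_conv_radius Gs" unfolding Gs_def
    by (rule radius_bounded[where M=1]) (use cf_pos[of a b "a+b+2"] cf_le1[of a b "a+b+2"] assms ab in \<open>simp add: less_imp_le\<close>)
  have rL: "1 \<le> fps_conv_radius Ls" unfolding Ls_def
  proof (rule radius_bounded[where M=1])
    fix n :: nat show "\<bar>1 / real n\<bar> \<le> 1" by (cases n) auto
  qed
  have rO: "1 \<le> fps_conv_radius Os" unfolding Os_def
    by (rule radius_bounded[where M=1]) simp
  have key: "- deriv B x = eval_fps Q x" if x: "\<bar>x\<bar> < 1" for x
  proof -
    have xF: "ereal (norm x) < fps_conv_radius Fs" using x rF by (rule ereal_lt_radius)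
    have xG: "ereal (norm x) < fps_conv_radius Gs" using x rG by (rule ereal_lt_radius)
    have xL: "ereal (norm x) < fps_conv_radius Ls" using x rL by (rule ereal_lt_radius)
    have xO: "ereal (norm x) < fps_conv_radius Os" using x rO by (rule ereal_lt_radius)
    have xF': "ereal (norm x) < fps_conv_radius (fps_deriv Fs)" using xF by (rule radius_lt_deriv)
    have xG': "ereal (norm x) < fps_conv_radius (fps_deriv Gs)" using xG by (rule radius_lt_deriv)
    have x1: "1 - x > 0" using x by simp
    have dF: "(eval_fps Fs has_field_derivative eval_fps (fps_deriv Fs) x) (at x)"
      by (rule has_field_derivative_eval_fps[OF xF])
    have dG: "(eval_fps Gs has_field_derivative eval_fps (fps_deriv Gs) x) (at x)"
      by (rule has_field_derivative_eval_fps[OF xG])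
    have dL: "((\<lambda>x. c - ln (1 - x)) has_field_derivative 1 / (1 - x)) (at x)"
      using x1 by (auto intro!: derivative_eq_intros simp: field_simps)
    have dB: "(B has_field_derivative (eval_fps (fps_deriv Fs) x
        - (K * eval_fps (fps_deriv Gs) x * (c - ln (1 - x)) + 1 / (1 - x) * (K * eval_fps Gs x)))) (at x)"
      unfolding Bdef by (intro DERIV_diff DERIV_mult DERIV_cmult dF dG dL)
    have eL: "eval_fps Ls x = - ln (1 - x)"
    proof -
      have "(\<lambda>n. - ((- (-x)) ^ n) / of_nat n) sums ln (1 + - x)"
        using x by (intro ln_series') simp
      then have "(\<lambda>n. - (- (x ^ n) / of_nat n)) sums (- ln (1 - x))"
        using sums_minus by fastforce
      moreover have "(\<lambda>n. - (- (x ^ n) / of_nat n)) = (\<lambda>n. fps_nth Ls n * x ^ n)"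
        unfolding Ls_def by auto
      ultimately show ?thesis unfolding eval_fps_def by (simp add: sums_iff)
    qed
    have eO: "eval_fps Os x = 1 / (1 - x)"
    proof -
      have "(\<lambda>n. x ^ n) sums (1 / (1 - x))" using x by (intro geometric_sums) simp
      then show ?thesis unfolding eval_fps_def Os_def by (simp add: sums_iff)
    qed
    have eQ: "eval_fps Q x = K * c * eval_fps (fps_deriv Gs) x + K * (eval_fps (fps_deriv Gs) x * eval_fps Ls x)
       + K * (eval_fps Gs x * eval_fps Os x) - eval_fps (fps_deriv Fs) x"
    proof -
      have xc: "ereal (norm x) < fps_conv_radius (fps_const k :: real fps)" for k by simp
      have m1: "ereal (norm x) < fps_conv_radius (fps_const (K * c) * fps_deriv Gs)"
        by (intro radius_lt_mult xc xG')
      have m2: "ereal (norm x) < fps_conv_radius (fps_const K * (fps_deriv Gs * Ls))"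
        by (intro radius_lt_mult xc xG' xL)
      have m3: "ereal (norm x) < fps_conv_radius (fps_const K * (Gs * Os))"
        by (intro radius_lt_mult xc xG xO)
      have e1: "eval_fps (fps_const (K * c) * fps_deriv Gs) x = K * c * eval_fps (fps_deriv Gs) x"
        using eval_fps_mult[OF xc xG'] by simp
      have e2: "eval_fps (fps_const K * (fps_deriv Gs * Ls)) x = K * (eval_fps (fps_deriv Gs) x * eval_fps Ls x)"
        using eval_fps_mult[OF xc radius_lt_mult[OF xG' xL]] eval_fps_mult[OF xG' xL] by simp
      have e3: "eval_fps (fps_const K * (Gs * Os)) x = K * (eval_fps Gs x * eval_fps Os x)"
        using eval_fps_mult[OF xc radius_lt_mult[OF xG xO]] eval_fps_mult[OF xG xO] by simp
      show ?thesis unfolding Q_def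
        eval_fps_diff[OF radius_lt_add[OF radius_lt_add[OF m1 m2] m3] xF']
        eval_fps_add[OF radius_lt_add[OF m1 m2] m3] eval_fps_add[OF m1 m2] e1 e2 e3 ..
    qed
    show ?thesis unfolding eQ eL eO DERIV_imp_deriv[OF dB] by (simp add: algebra_simps)
  qed
  have rQ: "1 \<le> fps_conv_radius Q"
  proof -
    have hQ: "ereal r < fps_conv_radius Q" if r: "r < 1" for r :: real
    proof -
      have h: "ereal r < fps_conv_radius f" if "1 \<le> fps_conv_radius f" for f :: "real fps"
        using r that by (meson ereal_less(3) less_le_trans)
      show ?thesis unfolding Q_def
        by (intro radius_lt_add radius_lt_diff radius_lt_mult radius_lt_deriv h rF rG rL rO) simp_all
    qed
    show ?thesis
    proof (rule dense_le)
      fix y :: ereal assume y: "y < 1"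
      show "y \<le> fps_conv_radius Q"
      proof (cases y)
        case (real r) then show ?thesis using y hQ[of r] by simp
      qed (use y in auto)
    qed
  qed
  have cQ: "fps_nth Q k > 0" for k
  proof -
    have e: "fps_nth Q k = K * c * ((real k + 1) * cf a b (a + b + 2) (Suc k))
      + K * (\<Sum>i=0..k. ((real i + 1) * cf a b (a + b + 2) (Suc i)) * (1 / real (k - i)))
      + (K * (\<Sum>i=0..k. cf a b (a + b + 2) i) - (real k + 1) * cf a b (a + b) (Suc k))"
      unfolding Q_def Fs_def Gs_def Ls_def Os_def
      apply (simp only: fps_sub_nth fps_add_nth fps_mult_left_const_nth)
      apply (simp add: fps_mult_nth add.commute)
      done
    have t1: "K * c * ((real k + 1) * cf a b (a + b + 2) (Suc k)) \<ge> 0"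
      using K0 assms cf_pos[of a b "a+b+2" "Suc k"] by simp
    have t2: "K * (\<Sum>i=0..k. ((real i + 1) * cf a b (a + b + 2) (Suc i)) * (1 / real (k - i))) \<ge> 0"
      using K0 assms cf_pos[of a b "a+b+2"] by (intro mult_nonneg_nonneg sum_nonneg) (auto simp: less_imp_le)
    have t3: "K * (\<Sum>i=0..k. cf a b (a + b + 2) i) - (real k + 1) * cf a b (a + b) (Suc k) > 0"
      unfolding K_def key_identity[OF assms(1,2)]
      using assms cf_pos[OF assms(1,2) s0, of "Suc k"] by simp
    show ?thesis unfolding e using t1 t2 t3 by linarith
  qed
  show ?thesis
  proof (intro allI ballI)
    fix n :: nat and x :: real assume x: "x \<in> {0<..<1}"
    have "(deriv ^^ n) (\<lambda>t. - deriv B t) x = eval_fps ((fps_deriv ^^ n) Q) x"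
      by (rule higher_deriv_eval_fps[OF rQ key]) (use x in auto)
    also have "\<dots> > 0"
      using x by (intro eval_fps_pos funpow_deriv_pos cQ radius_funpow_deriv rQ) auto
    finally show "(deriv ^^ n) (\<lambda>t. - deriv B t) x > 0" .
  qed
qed

end
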